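(* In the setting of the context, assume $\Pi^\rho_0=\{\mathbf{0}\}$ and that Condition I holds ($ZR^i\in L^1$ for all $i\in\{1,\dots,d\}$ and all $Z\in\mathcal{Q}$). If $\mathcal{Q}\cap\mathcal{M}=\emptyset$, then the market admits $\rho$-arbitrage.
   Context: Let $(\Omega,\mathcal{F},\mathbb{P})$ be a probability space and a market: riskless asset $S^0_0=1$, $S^0_1=1+r$, $r>-1$; risky assets $S^1,\dots,S^d$ with constants $S^i_0>0$ and real-valued $\mathcal{F}$-measurable $S^i_1$; returns $R^i:=(S^i_1-S^i_0)/S^i_0$. Standing assumptions: nonredundancy (if $\theta\in\mathbb{R}^{1+d}$ with $\sum_{i=0}^d\theta^iS^i_t=0$ a.s. for $t\in\{0,1\}$ then $\theta=0$), $R^i\in L^1$, $\mathbb{E}[R^i]\ne r$ for some $i$. Excess return: $X_\pi:=\pi\cdot(R-r\mathbf{1})$; $\Pi_0:=\{\pi:\mathbb{E}[X_\pi]=0\}$. $L$ is a Riesz space with $L^\infty\subset L\subset L^1$ containing all $X_\pi$. $\mathcal{D}:=\{Z\in L^1:Z\ge0,\mathbb{E}[Z]=1\}$; $\mathcal{Q}\subset\mathcal{D}$ is convex with $1\in\mathcal{Q}$ and $\rho(X)=\sup_{Z\in\mathcal{Q}}\mathbb{E}[-ZX]$ on $L$, with $\mathbb{E}[-ZX]:=\mathbb{E}[ZX^-]-\mathbb{E}[ZX^+]$ and $\mathbb{E}[-ZX]=\infty$ if $\mathbb{E}[ZX^-]=\infty$. $\Pi^\rho_0$ is the set of $\pi\in\Pi_0$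 with $\rho(X_\pi)<\infty$ and $\rho(X_\pi)\le\rho(X_{\pi'})$ for all $\pi'\in\Pi_0$. $\mathcal{M}:=\{Z\in\mathcal{D}:\mathbb{E}[Z(R^i-r)]=0\ \forall i\}$. $\pi$ is $\rho$-efficient if $\mathbb{E}[X_\pi]\ge0$ and no $\pi'$ has $\mathbb{E}[X_{\pi'}]\ge\mathbb{E}[X_\pi]$, $\rho(X_{\pi'})\le\rho(X_\pi)$ with one inequality strict; $\rho$-arbitrage means no $\rho$-efficient portfolio exists. *)

theory Defs
  imports "HOL-Probability.Probability"
begin

text \<open>One-period market. Risky assets are indexed by a finite type 'd
  (so d = CARD('d)); the riskless asset is treated separately.\<close>

definition ret :: "('d \<Rightarrow> real) \<Rightarrow> ('d \<Rightarrow> 'a \<Rightarrow> real) \<Rightarrow> 'd \<Rightarrow> 'a \<Rightarrow> real" where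
  "ret S0 S1 i \<omega> = (S1 i \<omega> - S0 i) / S0 i"

definition excess :: "real \<Rightarrow> ('d::finite \<Rightarrow> 'a \<Rightarrow> real) \<Rightarrow> ('d \<Rightarrow> real) \<Rightarrow> 'a \<Rightarrow> real" where
  "excess r R \<pi> \<omega> = (\<Sum>i\<in>UNIV. \<pi> i * (R i \<omega> - r))"

definition nonredundant :: "'a measure \<Rightarrow> real \<Rightarrow> ('d::finite \<Rightarrow> real) \<Rightarrow> ('d \<Rightarrow> 'a \<Rightarrow> real) \<Rightarrow> bool" where
  "nonredundant M r S0 S1 \<longleftrightarrow>
     (\<forall>(\<theta>0::real) (\<theta>::'d \<Rightarrow> real).
        (\<theta>0 * 1 + (\<Sum>i\<in>UNIV. \<theta> i * S0 i) = 0 \<and>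
         (AE \<omega> in M. \<theta>0 * (1 + r) + (\<Sum>i\<in>UNIV. \<theta> i * S1 i \<omega>) = 0))
        \<longrightarrow> \<theta>0 = 0 \<and> (\<forall>i. \<theta> i = 0))"

definition densities :: "'a measure \<Rightarrow> ('a \<Rightarrow> real) set" where
  "densities M = {Z. integrable M Z \<and> (AE \<omega> in M. Z \<omega> \<ge> 0) \<and> integral\<^sup>L M Z = 1}"

definition convex_fun_set :: "('a \<Rightarrow> real) set \<Rightarrow> bool" where
  "convex_fun_set Q \<longleftrightarrow> (\<forall>Z1\<in>Q. \<forall>Z2\<in>Q. \<forall>t::real. 0 \<le> t \<and> t \<le> 1 \<longrightarrow>
       (\<lambda>\<omega>. t * Z1 \<omega> + (1 - t) * Z2 \<omega>) \<in> Q)"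

definition neg_expect :: "'a measure \<Rightarrow> ('a \<Rightarrow> real) \<Rightarrow> ('a \<Rightarrow> real) \<Rightarrow> ereal" where
  "neg_expect M Z X =
     (let a = (\<integral>\<^sup>+ \<omega>. ennreal (Z \<omega> * max 0 (- X \<omega>)) \<partial>M);
          b = (\<integral>\<^sup>+ \<omega>. ennreal (Z \<omega> * max 0 (X \<omega>)) \<partial>M)
      in if a = \<infinity> then \<infinity> else enn2ereal a - enn2ereal b)"

definition rho :: "'a measure \<Rightarrow> ('a \<Rightarrow> real) set \<Rightarrow> ('a \<Rightarrow> real) \<Rightarrow> ereal" where
  "rho M Q X = (SUP Z\<in>Q. neg_expect M Z X)"

definition Pi0 :: "'a measure \<Rightarrow> real \<Rightarrow> ('d::finite \<Rightarrow> 'a \<Rightarrow> real) \<Rightarrow> ('d \<Rightarrow> real) set" where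
  "Pi0 M r R = {\<pi>. integral\<^sup>L M (excess r R \<pi>) = 0}"

definition Pi0_rho :: "'a measure \<Rightarrow> ('a \<Rightarrow> real) set \<Rightarrow> real \<Rightarrow> ('d::finite \<Rightarrow> 'a \<Rightarrow> real) \<Rightarrow> ('d \<Rightarrow> real) set" where
  "Pi0_rho M Q r R = {\<pi> \<in> Pi0 M r R. rho M Q (excess r R \<pi>) < \<infinity> \<and>
      (\<forall>\<pi>'\<in>Pi0 M r R. rho M Q (excess r R \<pi>) \<le> rho M Q (excess r R \<pi>'))}"

definition emm :: "'a measure \<Rightarrow> real \<Rightarrow> ('d \<Rightarrow> 'a \<Rightarrow> real) \<Rightarrow> ('a \<Rightarrow> real) set" where
  "emm M r R = {Z \<in> densities M. \<forall>i. integrable M (\<lambda>\<omega>. Z \<omega> * (R i \<omega> - r)) \<and>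
                                     integral\<^sup>L M (\<lambda>\<omega>. Z \<omega> * (R i \<omega> - r)) = 0}"

definition rho_efficient :: "'a measure \<Rightarrow> ('a \<Rightarrow> real) set \<Rightarrow> real \<Rightarrow> ('d::finite \<Rightarrow> 'a \<Rightarrow> real) \<Rightarrow> ('d \<Rightarrow> real) \<Rightarrow> bool" where
  "rho_efficient M Q r R \<pi> \<longleftrightarrow>
     integral\<^sup>L M (excess r R \<pi>) \<ge> 0 \<and>
     \<not> (\<exists>\<pi>'. integral\<^sup>L M (excess r R \<pi>') \<ge> integral\<^sup>L M (excess r R \<pi>) \<and>
             rho M Q (excess r R \<pi>') \<le> rho M Q (excess r R \<pi>) \<and>
             (integral\<^sup>L M (excess r R \<pi>') > integral\<^sup>L M (excess r R \<pi>) \<or>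
              rho M Q (excess r R \<pi>') < rho M Q (excess r R \<pi>)))"

definition rho_arbitrage :: "'a measure \<Rightarrow> ('a \<Rightarrow> real) set \<Rightarrow> real \<Rightarrow> ('d::finite \<Rightarrow> 'a \<Rightarrow> real) \<Rightarrow> bool" where
  "rho_arbitrage M Q r R \<longleftrightarrow> \<not> (\<exists>\<pi>. rho_efficient M Q r R \<pi>)"

end

theory Submission imports Defs "HOL-Analysis.Analysis" begin

lemma neg_expect_int:
  assumes f: "integrable M (\<lambda>\<omega>. Z \<omega> * X \<omega>)" and Z: "AE \<omega> in M. Z \<omega> \<ge> 0"
  shows "neg_expect M Z X = ereal (- integral\<^sup>L M (\<lambda>\<omega>. Z \<omega> * X \<omega>))"
proof -
  define f where "f = (\<lambda>\<omega>. Z \<omega> * X \<omega>)"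
  have fi: "integrable M f" using f unfolding f_def .
  have a: "(\<integral>\<^sup>+ \<omega>. ennreal (Z \<omega> * max 0 (- X \<omega>)) \<partial>M) = (\<integral>\<^sup>+ \<omega>. ennreal (- f \<omega>) \<partial>M)"
    apply (rule nn_integral_cong_AE) using Z
    by eventually_elim (auto simp: f_def max_def ennreal_neg mult_nonneg_nonpos)
  have b: "(\<integral>\<^sup>+ \<omega>. ennreal (Z \<omega> * max 0 (X \<omega>)) \<partial>M) = (\<integral>\<^sup>+ \<omega>. ennreal (f \<omega>) \<partial>M)"
    apply (rule nn_integral_cong_AE) using Z
    by eventually_elim (auto simp: f_def max_def ennreal_neg mult_nonneg_nonpos)
  have fin1: "(\<integral>\<^sup>+ \<omega>. ennreal (f \<omega>) \<partial>M) < \<infinity>" and fin2: "(\<integral>\<^sup>+ \<omega>. ennreal (- f \<omega>) \<partial>M) < \<infinity>"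
    using fi unfolding real_integrable_def by (auto simp: less_top)
  have I: "integral\<^sup>L M f = enn2real (\<integral>\<^sup>+x. f x \<partial>M) - enn2real (\<integral>\<^sup>+x. ennreal (- f x) \<partial>M)"
    using real_lebesgue_integral_def[OF fi] .
  define A where "A = (\<integral>\<^sup>+ \<omega>. ennreal (- f \<omega>) \<partial>M)"
  define B where "B = (\<integral>\<^sup>+ \<omega>. ennreal (f \<omega>) \<partial>M)"
  have A: "A = ennreal (enn2real A)" using fin2 unfolding A_def by (simp add: less_top)
  have B: "B = ennreal (enn2real B)" using fin1 unfolding B_def by (simp add: less_top)
  have "enn2ereal A - enn2ereal B = ereal (enn2real A) - ereal (enn2real B)"
    by (subst A, subst B) (simp add: enn2ereal_ennreal)
  then show ?thesis
    unfolding neg_expect_def Let_def a b f_def[symmetric] I A_def[symmetric] B_def[symmetric]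
    using fin2 unfolding A_def[symmetric] by simp
qed

lemma lin_excess:
  fixes R :: "'d::finite \<Rightarrow> 'a \<Rightarrow> real"
  assumes Z: "integrable M Z" and ZR: "\<And>i. integrable M (\<lambda>\<omega>. Z \<omega> * R i \<omega>)"
  shows "integrable M (\<lambda>\<omega>. Z \<omega> * excess r R \<pi> \<omega>)"
    and "integral\<^sup>L M (\<lambda>\<omega>. Z \<omega> * excess r R \<pi> \<omega>) = (\<Sum>i\<in>UNIV. \<pi> i * integral\<^sup>L M (\<lambda>\<omega>. Z \<omega> * (R i \<omega> - r)))"
proof -
  have eq: "(\<lambda>\<omega>. Z \<omega> * excess r R \<pi> \<omega>) = (\<lambda>\<omega>. \<Sum>i\<in>UNIV. \<pi> i * (Z \<omega> * (R i \<omega> - r)))"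
    by (auto simp: excess_def sum_distrib_left algebra_simps intro!: sum.cong)
  have i: "integrable M (\<lambda>\<omega>. Z \<omega> * (R i \<omega> - r))" for i
  proof -
    have "integrable M (\<lambda>\<omega>. Z \<omega> * R i \<omega> - r * Z \<omega>)"
      using Bochner_Integration.integrable_diff[OF ZR[of i] integrable_mult_right[OF Z, of r]] .
    then show ?thesis by (simp add: algebra_simps)
  qed
  show "integrable M (\<lambda>\<omega>. Z \<omega> * excess r R \<pi> \<omega>)"
    unfolding eq by (intro Bochner_Integration.integrable_sum Bochner_Integration.integrable_mult_right i)
  show "integral\<^sup>L M (\<lambda>\<omega>. Z \<omega> * excess r R \<pi> \<omega>) = (\<Sum>i\<in>UNIV. \<pi> i * integral\<^sup>L M (\<lambda>\<omega>. Z \<omega> * (R i \<omega> - r)))"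
    unfolding eq using i by (subst Bochner_Integration.integral_sum) (auto intro: Bochner_Integration.integrable_mult_right)
qed

theorem proposition4p19:
  fixes M :: "'a measure" and r :: real
    and S0 :: "'d::finite \<Rightarrow> real" and S1 :: "'d \<Rightarrow> 'a \<Rightarrow> real"
    and Q :: "('a \<Rightarrow> real) set"
  assumes "prob_space M"
    and "r > -1"
    and "\<And>i. S0 i > 0"
    and "\<And>i. S1 i \<in> borel_measurable M"
    and "nonredundant M r S0 S1"
    and "\<And>i. integrable M (ret S0 S1 i)"
    and "\<exists>i. integral\<^sup>L M (ret S0 S1 i) \<noteq> r"
    and "Q \<subseteq> densities M" and "convex_fun_set Q" and "(\<lambda>_. 1) \<in> Q"
    and "Pi0_rho M Q r (ret S0 S1) = {(\<lambda>_. 0)}"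
    and "\<And>Z i. Z \<in> Q \<Longrightarrow> integrable M (\<lambda>\<omega>. Z \<omega> * ret S0 S1 i \<omega>)"
    and "Q \<inter> emm M r (ret S0 S1) = {}"
  shows "rho_arbitrage M Q r (ret S0 S1)"
proof -
  define R where "R = ret S0 S1"
  define m where "m = (\<lambda>Z i. integral\<^sup>L M (\<lambda>\<omega>. Z \<omega> * (R i \<omega> - r)))"
  note QD = assms(8)
  have Qint: "integrable M Z" and Qpos: "AE \<omega> in M. Z \<omega> \<ge> 0" if "Z \<in> Q" for Z
    using QD that by (auto simp: densities_def)
  have QR: "integrable M (\<lambda>\<omega>. Z \<omega> * R i \<omega>)" if "Z \<in> Q" for Z i
    using assms(12) that unfolding R_def by auto
  have ne: "neg_expect M Z (excess r R \<pi>) = ereal (- (\<Sum>i\<in>UNIV. \<pi> i * m Z i))" if "Z \<in> Q" for Z \<pi>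
  proof -
    have h: "integrable M (\<lambda>\<omega>. Z \<omega> * R i \<omega>)" for i using QR[OF that] .
    show ?thesis
      using neg_expect_int[OF lin_excess(1)[where R=R, OF Qint[OF that] h] Qpos[OF that]]
        lin_excess(2)[where R=R, OF Qint[OF that] h] unfolding m_def by simp
  qed
  have rho_eq: "rho M Q (excess r R \<pi>) = (SUP Z\<in>Q. ereal (- (\<Sum>i\<in>UNIV. \<pi> i * m Z i)))" for \<pi>
    unfolding rho_def by (rule SUP_cong) (auto simp: ne)
  have E_eq: "integral\<^sup>L M (excess r R \<pi>) = (\<Sum>i\<in>UNIV. \<pi> i * m (\<lambda>_. 1) i)" for \<pi>
  proof -
    have h: "integrable M (\<lambda>\<omega>. 1 * R i \<omega>)" for i using QR[OF assms(10)] .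
    show ?thesis
      using lin_excess(2)[where R=R, OF Qint[OF assms(10)] h, of r \<pi>] unfolding m_def by simp
  qed
  have rho_ge: "ereal (- (\<Sum>i\<in>UNIV. \<pi> i * m Z i)) \<le> rho M Q (excess r R \<pi>)" if "Z \<in> Q" for Z \<pi>
    unfolding rho_eq using that by (rule SUP_upper2) simp
  define C where "C = (\<lambda>Z. \<chi> i. m Z i) ` Q"
  have "convex C"
    unfolding convex_def C_def
  proof (intro ballI allI impI, elim imageE conjE)
    fix x y :: "real^'d" and u v :: real and Z1 Z2 assume uv: "0 \<le> u" "0 \<le> v" "u + v = 1" and x: "x = (\<chi> i. m Z1 i)" and Z1: "Z1 \<in> Q"
      and y: "y = (\<chi> i. m Z2 i)" and Z2: "Z2 \<in> Q"
    define Z where "Z = (\<lambda>\<omega>. u * Z1 \<omega> + (1 - u) * Z2 \<omega>)"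
    have ZQ: "Z \<in> Q" using assms(9) Z1 Z2 uv unfolding convex_fun_set_def Z_def by auto
    have i: "integrable M (\<lambda>\<omega>. Z \<omega> * (R i \<omega> - r))" if "Z \<in> Q" for Z i
    proof -
      have "integrable M (\<lambda>\<omega>. Z \<omega> * R i \<omega> - r * Z \<omega>)"
        using Bochner_Integration.integrable_diff[OF QR[OF that, of i] integrable_mult_right[OF Qint[OF that], of r]] .
      then show ?thesis by (simp add: algebra_simps)
    qed
    have "m Z i = u * m Z1 i + v * m Z2 i" for i
    proof -
      have "(\<lambda>\<omega>. Z \<omega> * (R i \<omega> - r)) = (\<lambda>\<omega>. u * (Z1 \<omega> * (R i \<omega> - r)) + (1 - u) * (Z2 \<omega> * (R i \<omega> - r)))"
        unfolding Z_def by (auto simp: algebra_simps)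
      then show ?thesis unfolding m_def using i[OF Z1] i[OF Z2] uv
        by (simp add: integral_add integral_mult_right)
    qed
    then have "u *\<^sub>R x + v *\<^sub>R y = (\<chi> i. m Z i)" unfolding x y by (simp add: vec_eq_iff)
    then show "u *\<^sub>R x + v *\<^sub>R y \<in> (\<lambda>Z. \<chi> i. m Z i) ` Q" using ZQ by blast
  qed
  moreover have "0 \<notin> C"
  proof
    assume "0 \<in> C"
    then obtain Z where ZQ: "Z \<in> Q" and "(\<chi> i. m Z i) = 0" unfolding C_def by auto
    then have m0: "m Z i = 0" for i by (simp add: vec_eq_iff)
    have i: "integrable M (\<lambda>\<omega>. Z \<omega> * (R i \<omega> - r))" for i
    proof -
      have "integrable M (\<lambda>\<omega>. Z \<omega> * R i \<omega> - r * Z \<omega>)"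
        using Bochner_Integration.integrable_diff[OF QR[OF ZQ, of i] integrable_mult_right[OF Qint[OF ZQ], of r]] .
      then show ?thesis by (simp add: algebra_simps)
    qed
    have "Z \<in> emm M r (ret S0 S1)"
      unfolding emm_def R_def[symmetric] using QD ZQ i m0 unfolding m_def by auto
    then show False using assms(13) ZQ by auto
  qed
  ultimately obtain a where a0: "a \<noteq> 0" and aC: "\<forall>x\<in>C. 0 \<le> inner a x"
    using separating_hyperplane_set_0 by blast
  define p where "p = (\<lambda>i. a $ i)"
  have pC: "0 \<le> (\<Sum>i\<in>UNIV. p i * m Z i)" if "Z \<in> Q" for Z
    using aC that unfolding C_def p_def by (auto simp: inner_vec_def)
  have p0: "p \<noteq> (\<lambda>_. 0)" using a0 unfolding p_def by (auto simp: vec_eq_iff fun_eq_iff)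
  have rho_p: "rho M Q (excess r R p) \<le> 0"
    unfolding rho_eq by (rule SUP_least) (use pC in auto)
  have Ep: "integral\<^sup>L M (excess r R p) \<ge> 0"
    unfolding E_eq using pC[OF assms(10)] .
  show ?thesis
  proof (cases "integral\<^sup>L M (excess r R p) = 0")
    case True
    have "p \<in> Pi0_rho M Q r R"
      unfolding Pi0_rho_def
    proof (intro CollectI conjI ballI)
      show "p \<in> Pi0 M r R" using True by (simp add: Pi0_def)
      show "rho M Q (excess r R p) < \<infinity>" using rho_p by (auto simp: less_top[symmetric] intro: order.strict_trans1)
      fix \<pi>' assume "\<pi>' \<in> Pi0 M r R"
      then have "integral\<^sup>L M (excess r R \<pi>') = 0" by (simp add: Pi0_def)
      then have "ereal (- (\<Sum>i\<in>UNIV. \<pi>' i * m (\<lambda>_. 1) i)) = 0" unfolding E_eq by simp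
      then have "0 \<le> rho M Q (excess r R \<pi>')" using rho_ge[OF assms(10), of \<pi>'] by (simp add: zero_ereal_def)
      then show "rho M Q (excess r R p) \<le> rho M Q (excess r R \<pi>')" using rho_p by simp
    qed
    then show ?thesis using assms(11) p0 unfolding R_def by auto
  next
    case False
    then have Ep': "integral\<^sup>L M (excess r R p) > 0" using Ep by simp
    show ?thesis
      unfolding rho_arbitrage_def rho_efficient_def R_def[symmetric]
    proof (intro notI, elim exE conjE)
      fix \<pi> assume nd: "\<not> (\<exists>\<pi>'. integral\<^sup>L M (excess r R \<pi>) \<le> integral\<^sup>L M (excess r R \<pi>') \<and>
             rho M Q (excess r R \<pi>') \<le> rho M Q (excess r R \<pi>) \<and>
             (integral\<^sup>L M (excess r R \<pi>) < integral\<^sup>L M (excess r R \<pi>') \<or>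
              rho M Q (excess r R \<pi>') < rho M Q (excess r R \<pi>)))"
      define q where "q = (\<lambda>i. \<pi> i + p i)"
      have sq: "(\<Sum>i\<in>UNIV. q i * m Z i) = (\<Sum>i\<in>UNIV. \<pi> i * m Z i) + (\<Sum>i\<in>UNIV. p i * m Z i)" for Z
        unfolding q_def by (simp add: distrib_right sum.distrib)
      have E1: "integral\<^sup>L M (excess r R \<pi>) < integral\<^sup>L M (excess r R q)"
        using Ep' unfolding E_eq sq by simp
      have R1: "rho M Q (excess r R q) \<le> rho M Q (excess r R \<pi>)"
        unfolding rho_eq[of q]
      proof (rule SUP_least)
        fix Z assume ZQ: "Z \<in> Q"
        have "ereal (- (\<Sum>i\<in>UNIV. q i * m Z i)) \<le> ereal (- (\<Sum>i\<in>UNIV. \<pi> i * m Z i))"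
          using pC[OF ZQ] unfolding sq by simp
        also have "\<dots> \<le> rho M Q (excess r R \<pi>)" by (rule rho_ge[OF ZQ])
        finally show "ereal (- (\<Sum>i\<in>UNIV. q i * m Z i)) \<le> rho M Q (excess r R \<pi>)" .
      qed
      show False using nd E1 R1 by auto
    qed
  qed
qed

end
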